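(* Let $\Gamma$ be a connected connected-homogeneous locally-finite bipartite graph with bipartition $X\cup Y$. If $\Gamma$ is not a tree and has at least one vertex of degree greater than $2$, then $\Gamma$ embeds the $4$-cycle $C_4$ as an induced subgraph.
   Context: A bipartite graph with given bipartition $X\cup Y$ is a connected-homogeneous bipartite graph if every isomorphism between finite connected induced subgraphs mapping vertices of $X$ to vertices of $X$ and vertices of $Y$ to vertices of $Y$ extends to an automorphism of the graph preserving $X$ and $Y$ setwise. Locally-finite: every vertex has finite degree. *)

theory Defs
  imports Main
begin

definition simple_graph :: "'a set \<Rightarrow> ('a \<Rightarrow> 'a \<Rightarrow> bool) \<Rightarrow> bool" where
  "simple_graph V E \<longleftrightarrow>
     (\<forall>u v. E u v \<longrightarrow> u \<in> V \<and> v \<in> V) \<and>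
     (\<forall>u v. E u v \<longrightarrow> E v u) \<and>
     (\<forall>v. \<not> E v v)"

definition bipartite_graph :: "'a set \<Rightarrow> ('a \<Rightarrow> 'a \<Rightarrow> bool) \<Rightarrow> 'a set \<Rightarrow> 'a set \<Rightarrow> bool" where
  "bipartite_graph V E X Y \<longleftrightarrow>
     simple_graph V E \<and> X \<union> Y = V \<and> X \<inter> Y = {} \<and>
     (\<forall>u v. E u v \<longrightarrow> (u \<in> X \<and> v \<in> Y) \<or> (u \<in> Y \<and> v \<in> X))"

definition nbhd :: "'a set \<Rightarrow> ('a \<Rightarrow> 'a \<Rightarrow> bool) \<Rightarrow> 'a \<Rightarrow> 'a set" where
  "nbhd V E v = {w \<in> V. E v w}"

definition degree :: "'a set \<Rightarrow> ('a \<Rightarrow> 'a \<Rightarrow> bool) \<Rightarrow> 'a \<Rightarrow> nat" where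
  "degree V E v = card (nbhd V E v)"

definition locally_finite :: "'a set \<Rightarrow> ('a \<Rightarrow> 'a \<Rightarrow> bool) \<Rightarrow> bool" where
  "locally_finite V E \<longleftrightarrow> (\<forall>v \<in> V. finite (nbhd V E v))"

definition connected_on :: "('a \<Rightarrow> 'a \<Rightarrow> bool) \<Rightarrow> 'a set \<Rightarrow> bool" where
  "connected_on E A \<longleftrightarrow>
     (\<forall>u \<in> A. \<forall>v \<in> A. (\<lambda>x y. x \<in> A \<and> y \<in> A \<and> E x y)\<^sup>*\<^sup>* u v)"

definition connected_graph :: "'a set \<Rightarrow> ('a \<Rightarrow> 'a \<Rightarrow> bool) \<Rightarrow> bool" where
  "connected_graph V E \<longleftrightarrow> connected_on E V"

definition induced_iso :: "('a \<Rightarrow> 'a \<Rightarrow> bool) \<Rightarrow> 'a set \<Rightarrow> 'a set \<Rightarrow> ('a \<Rightarrow> 'a) \<Rightarrow> bool" where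
  "induced_iso E A B f \<longleftrightarrow>
     bij_betw f A B \<and> (\<forall>u \<in> A. \<forall>v \<in> A. E (f u) (f v) \<longleftrightarrow> E u v)"

definition bip_automorphism ::
  "'a set \<Rightarrow> ('a \<Rightarrow> 'a \<Rightarrow> bool) \<Rightarrow> 'a set \<Rightarrow> 'a set \<Rightarrow> ('a \<Rightarrow> 'a) \<Rightarrow> bool" where
  "bip_automorphism V E X Y g \<longleftrightarrow>
     induced_iso E V V g \<and> g ` X = X \<and> g ` Y = Y"

definition conn_homogeneous_bipartite ::
  "'a set \<Rightarrow> ('a \<Rightarrow> 'a \<Rightarrow> bool) \<Rightarrow> 'a set \<Rightarrow> 'a set \<Rightarrow> bool" where
  "conn_homogeneous_bipartite V E X Y \<longleftrightarrow>
     bipartite_graph V E X Y \<and>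
     (\<forall>A B f. A \<subseteq> V \<and> B \<subseteq> V \<and> finite A \<and> finite B \<and>
        connected_on E A \<and> connected_on E B \<and> induced_iso E A B f \<and>
        f ` (A \<inter> X) \<subseteq> X \<and> f ` (A \<inter> Y) \<subseteq> Y \<longrightarrow>
        (\<exists>g. bip_automorphism V E X Y g \<and> (\<forall>a \<in> A. g a = f a)))"

definition is_cycle :: "'a set \<Rightarrow> ('a \<Rightarrow> 'a \<Rightarrow> bool) \<Rightarrow> 'a list \<Rightarrow> bool" where
  "is_cycle V E cs \<longleftrightarrow>
     length cs \<ge> 3 \<and> distinct cs \<and> set cs \<subseteq> V \<and>
     (\<forall>i. Suc i < length cs \<longrightarrow> E (cs ! i) (cs ! Suc i)) \<and>
     E (last cs) (hd cs)"

definition is_tree :: "'a set \<Rightarrow> ('a \<Rightarrow> 'a \<Rightarrow> bool) \<Rightarrow> bool" where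
  "is_tree V E \<longleftrightarrow> connected_graph V E \<and> (\<nexists>cs. is_cycle V E cs)"

definition embeds_induced_C4 :: "'a set \<Rightarrow> ('a \<Rightarrow> 'a \<Rightarrow> bool) \<Rightarrow> bool" where
  "embeds_induced_C4 V E \<longleftrightarrow>
     (\<exists>a b c d. a \<in> V \<and> b \<in> V \<and> c \<in> V \<and> d \<in> V \<and> distinct [a, b, c, d] \<and>
        E a b \<and> E b c \<and> E c d \<and> E d a \<and> \<not> E a c \<and> \<not> E b d)"

end

theory Submission
  imports Defs
begin



definition cyc :: "'a set \<Rightarrow> ('a \<Rightarrow> 'a \<Rightarrow> bool) \<Rightarrow> nat \<Rightarrow> (nat \<Rightarrow> 'a) \<Rightarrow> bool" where
  "cyc V E n c \<longleftrightarrow> 3 \<le> n \<and> inj_on c {..<n} \<and> (\<forall>i. c i \<in> V) \<and>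
     (\<forall>i. E (c i) (c (Suc i))) \<and> (\<forall>i. c (i + n) = c i)"

lemma mk_cyc:
  assumes "3 \<le> m" "inj_on d {..<m}" "\<And>t. t < m \<Longrightarrow> d t \<in> V"
    "\<And>t. Suc t < m \<Longrightarrow> E (d t) (d (Suc t))" "E (d (m-1)) (d 0)"
  shows "cyc V E m (\<lambda>t. d (t mod m))"
  unfolding cyc_def
proof (intro conjI allI)
  show "inj_on (\<lambda>t. d (t mod m)) {..<m}" using assms(2) by (auto simp: inj_on_def)
  fix i
  show "d (i mod m) \<in> V" using assms(1,3) by auto
  show "d ((i + m) mod m) = d (i mod m)" by simp
  show "E (d (i mod m)) (d (Suc i mod m))"
  proof (cases "Suc (i mod m) = m")
    case True
    then have "Suc i mod m = 0" by (simp add: mod_Suc)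
    moreover have "i mod m = m - 1" using True by simp
    ultimately show ?thesis using assms(5) by simp
  next
    case False
    then have "Suc i mod m = Suc (i mod m)" by (simp add: mod_Suc)
    moreover have "Suc (i mod m) < m" using False assms(1)
      by (metis Suc_lessI mod_less_divisor not_less_eq_eq le0 less_le_trans numeral_3_eq_3 zero_less_Suc)
    ultimately show ?thesis using assms(4) by simp
  qed
qed (use assms(1) in simp)

lemma is_cycle_cyc:
  assumes "is_cycle V E cs"
  shows "cyc V E (length cs) (\<lambda>t. cs ! (t mod length cs))"
proof (rule mk_cyc)
  show "3 \<le> length cs" using assms by (simp add: is_cycle_def)
  show "inj_on ((!) cs) {..<length cs}" using assms by (simp add: is_cycle_def inj_on_def nth_eq_iff_index_eq)
  show "cs ! t \<in> V" if "t < length cs" for t using assms that by (auto simp: is_cycle_def)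
  show "E (cs ! t) (cs ! Suc t)" if "Suc t < length cs" for t using assms that by (auto simp: is_cycle_def)
  have "cs \<noteq> []" using assms by (auto simp: is_cycle_def)
  then show "E (cs ! (length cs - 1)) (cs ! 0)" using assms by (simp add: is_cycle_def last_conv_nth hd_conv_nth)
qed

lemma cyc_mod:
  assumes "cyc V E n c" shows "c (i mod n) = c i"
proof -
  have p: "c (x + k * n) = c x" for x k
  proof (induction k)
    case (Suc k)
    have "c (x + Suc k * n) = c ((x + k * n) + n)" by (simp add: algebra_simps)
    also have "\<dots> = c (x + k * n)" using assms by (simp add: cyc_def)
    finally show ?case using Suc by simp
  qed simp
  show ?thesis using p[of "i mod n" "i div n"] by (simp add: mod_div_mult_eq)
qed

lemma cyc_shift:
  assumes "cyc V E n c" shows "cyc V E n (\<lambda>i. c (Suc i))"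
  unfolding cyc_def
proof (intro conjI allI)
  show "3 \<le> n" using assms by (simp add: cyc_def)
  show "inj_on (\<lambda>i. c (Suc i)) {..<n}"
  proof (rule inj_onI)
    fix i j assume ij: "i \<in> {..<n}" "j \<in> {..<n}" "c (Suc i) = c (Suc j)"
    then have "c (Suc i mod n) = c (Suc j mod n)" using cyc_mod[OF assms] by simp
    moreover have "Suc i mod n < n" "Suc j mod n < n" using assms by (auto simp: cyc_def)
    ultimately have "Suc i mod n = Suc j mod n" using assms by (auto simp: cyc_def inj_on_def)
    then show "i = j" using ij by (auto simp: mod_Suc split: if_splits)
  qed
  fix i
  show "c (Suc i) \<in> V" "E (c (Suc i)) (c (Suc (Suc i)))" "c (Suc (i + n)) = c (Suc i)"
    using assms by (auto simp: cyc_def) (metis add_Suc)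
qed



fun chain :: "('a \<Rightarrow> 'a \<Rightarrow> bool) \<Rightarrow> 'a list \<Rightarrow> bool" where
  "chain E [] = True"
| "chain E [x] = True"
| "chain E (x # y # xs) = (E x y \<and> chain E (y # xs))"

lemma chain_reach:
  assumes "chain E (x # xs)" "set (x # xs) \<subseteq> A" "v \<in> set (x # xs)"
  shows "(\<lambda>x y. x \<in> A \<and> y \<in> A \<and> E x y)\<^sup>*\<^sup>* x v"
  using assms
proof (induction xs arbitrary: x)
  case Nil then show ?case by simp
next
  case (Cons y ys)
  show ?case
  proof (cases "v = x")
    case False
    then have "(\<lambda>x y. x \<in> A \<and> y \<in> A \<and> E x y)\<^sup>*\<^sup>* y v" using Cons by simp
    moreover have "E x y" "x \<in> A" "y \<in> A" using Cons.prems by auto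
    ultimately show ?thesis by (simp add: converse_rtranclp_into_rtranclp)
  qed simp
qed

lemma chain_conn:
  assumes "symp E" "chain E xs" "xs \<noteq> []"
  shows "connected_on E (set xs)"
proof -
  obtain x ys where xs: "xs = x # ys" using assms(3) by (cases xs) auto
  let ?R = "\<lambda>x y. x \<in> set xs \<and> y \<in> set xs \<and> E x y"
  have s: "symp ?R" using assms(1) by (auto intro!: sympI dest: sympD)
  have r: "?R\<^sup>*\<^sup>* x v" if "v \<in> set xs" for v
    using chain_reach[of E x ys "set xs" v] assms(2) that xs by simp
  show ?thesis unfolding connected_on_def
  proof (intro ballI)
    fix u v assume "u \<in> set xs" "v \<in> set xs"
    then have "?R\<^sup>*\<^sup>* u x" "?R\<^sup>*\<^sup>* x v" using r sympD[OF symp_rtranclp[OF s]] by blast+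
    then show "?R\<^sup>*\<^sup>* u v" by (rule rtranclp_trans)
  qed
qed
lemma chain_map_upt:
  assumes "\<And>i. l \<le> i \<Longrightarrow> Suc i < h \<Longrightarrow> E (p i) (p (Suc i))"
  shows "chain E (map p [l..<h])"
  using assms
proof (induction "h - l" arbitrary: l)
  case 0 then show ?case by simp
next
  case (Suc k)
  then have lh: "l < h" by simp
  show ?case
  proof (cases "Suc l < h")
    case True
    have "chain E (map p [Suc l..<h])" using Suc by simp
    moreover have "[l..<h] = l # [Suc l..<h]" using lh by (simp add: upt_conv_Cons)
    moreover have "[Suc l..<h] = Suc l # [Suc (Suc l)..<h]" using True by (simp add: upt_conv_Cons)
    ultimately show ?thesis using Suc.prems[of l] True by simp
  next
    case False
    then have "[l..<h] = [l]" using lh by (simp add: upt_conv_Cons)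
    then show ?thesis by simp
  qed
qed

locale chb =
  fixes V E X Y
  assumes CH: "conn_homogeneous_bipartite V E X Y"
    and noC4: "\<not> embeds_induced_C4 V E"
    and lf: "locally_finite V E"
begin

lemma bip: "bipartite_graph V E X Y" using CH by (simp add: conn_homogeneous_bipartite_def)

lemma sym: "E a b \<Longrightarrow> E b a" using bip by (auto simp: bipartite_graph_def simple_graph_def)
lemma symp: "symp E" using sym by (auto intro: sympI)
lemma irr: "\<not> E a a" using bip by (auto simp: bipartite_graph_def simple_graph_def)
lemma inV: "E a b \<Longrightarrow> a \<in> V \<and> b \<in> V" using bip by (auto simp: bipartite_graph_def simple_graph_def)
lemma side: "E a b \<Longrightarrow> (a \<in> X) = (b \<notin> X)" using bip by (auto simp: bipartite_graph_def)
lemma Yiff: "a \<in> V \<Longrightarrow> (a \<in> Y) = (a \<notin> X)" using bip by (auto simp: bipartite_graph_def)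

lemma no4:
  assumes "distinct [a,b,c,d]" "E a b" "E b c" "E c d" "E d a"
  shows False
proof -
  have "\<not> E a c"
  proof
    assume "E a c" then show False using side[OF assms(2)] side[OF assms(3)] side[of a c] by blast
  qed
  moreover have "\<not> E b d"
  proof
    assume "E b d" then show False using side[OF assms(3)] side[OF assms(4)] side[of b d] by blast
  qed
  moreover have "a \<in> V" "b \<in> V" "c \<in> V" "d \<in> V" using assms inV by auto
  ultimately
  have "embeds_induced_C4 V E" unfolding embeds_induced_C4_def
    using assms by blast
  then show False using noC4 by simp
qed

lemma aut:
  assumes "bip_automorphism V E X Y g"
  shows "\<And>x. x \<in> V \<Longrightarrow> g x \<in> V" "inj_on g V" "\<And>x y. E x y \<Longrightarrow> E (g x) (g y)"
    "\<And>x y. x \<in> V \<Longrightarrow> y \<in> V \<Longrightarrow> E (g x) (g y) = E x y" "g ` V = V"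
proof -
  have i: "bij_betw g V V" "\<forall>u\<in>V. \<forall>v\<in>V. E (g u) (g v) = E u v"
    using assms unfolding bip_automorphism_def induced_iso_def by auto
  show "\<And>x. x \<in> V \<Longrightarrow> g x \<in> V" "inj_on g V" "g ` V = V" using i(1) by (auto simp: bij_betw_def)
  show "\<And>x y. x \<in> V \<Longrightarrow> y \<in> V \<Longrightarrow> E (g x) (g y) = E x y" using i(2) by blast
  show "\<And>x y. E x y \<Longrightarrow> E (g x) (g y)" using i(2) inV by blast
qed

lemma ext:
  assumes "A \<subseteq> V" "finite A" "connected_on E A" "connected_on E (f ` A)" "inj_on f A"
    "f ` A \<subseteq> V" "\<And>x y. x \<in> A \<Longrightarrow> y \<in> A \<Longrightarrow> E (f x) (f y) = E x y"
    "\<And>x. x \<in> A \<Longrightarrow> (f x \<in> X) = (x \<in> X)"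
  shows "\<exists>g. bip_automorphism V E X Y g \<and> (\<forall>a\<in>A. g a = f a)"
proof -
  have "induced_iso E A (f ` A) f" using assms(5,7) unfolding induced_iso_def bij_betw_def by simp
  moreover have "f ` (A \<inter> X) \<subseteq> X" using assms(8) by auto
  moreover have "f ` (A \<inter> Y) \<subseteq> Y" using assms(1,6,8) Yiff by auto
  moreover have "finite (f ` A)" using assms(2) by simp
  moreover have H: "\<And>A B f. A \<subseteq> V \<and> B \<subseteq> V \<and> finite A \<and> finite B \<and>
        connected_on E A \<and> connected_on E B \<and> induced_iso E A B f \<and>
        f ` (A \<inter> X) \<subseteq> X \<and> f ` (A \<inter> Y) \<subseteq> Y \<Longrightarrow>
        (\<exists>g. bip_automorphism V E X Y g \<and> (\<forall>a \<in> A. g a = f a))"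
    using CH unfolding conn_homogeneous_bipartite_def by blast
  ultimately show ?thesis using assms(1-4,6) by (intro H[of A "f ` A" f]) simp
qed

lemma deg_side:
  assumes "x \<in> V" "x' \<in> V" "(x \<in> X) = (x' \<in> X)"
  shows "degree V E x = degree V E x'"
proof -
  have c: "connected_on E {x}" by (simp add: connected_on_def)
  have c': "connected_on E ((\<lambda>_. x') ` {x})" by (simp add: connected_on_def)
  obtain g where g: "bip_automorphism V E X Y g" "g x = x'"
  proof -
    have "\<exists>g. bip_automorphism V E X Y g \<and> (\<forall>a\<in>{x}. g a = x')"
      by (rule ext[of "{x}" "\<lambda>_. x'"]) (use c c' assms irr in auto)
    then show ?thesis using that by auto
  qed
  note a = aut[OF g(1)]
  have "nbhd V E x' = g ` nbhd V E x"
  proof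
    show "g ` nbhd V E x \<subseteq> nbhd V E x'" using a g(2) by (auto simp: nbhd_def)
    show "nbhd V E x' \<subseteq> g ` nbhd V E x"
    proof
      fix w assume "w \<in> nbhd V E x'"
      then have w: "w \<in> V" "E x' w" by (auto simp: nbhd_def)
      then obtain z where z: "z \<in> V" "w = g z" using a(5) by blast
      then have "E x z" using a(4)[OF assms(1) z(1)] w g(2) by simp
      then show "w \<in> g ` nbhd V E x" using z by (auto simp: nbhd_def)
    qed
  qed
  moreover have "inj_on g (nbhd V E x)" using a(2) by (rule inj_on_subset) (auto simp: nbhd_def)
  ultimately show ?thesis by (simp add: degree_def card_image)
qed

lemma third:
  assumes "degree V E v > 2"
  shows "\<exists>w. E v w \<and> w \<noteq> a \<and> w \<noteq> b"
proof (rule ccontr)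
  assume "\<not> ?thesis"
  then have "nbhd V E v \<subseteq> {a, b}" by (auto simp: nbhd_def)
  then have "card (nbhd V E v) \<le> card {a, b}" by (intro card_mono) auto
  also have "\<dots> \<le> 2" by (simp add: card_insert_le_m1)
  finally show False using assms by (simp add: degree_def)
qed

lemma deg3:
  assumes "E v a" "E v b" "E v c" "distinct [a, b, c]"
  shows "degree V E v > 2"
proof -
  have "v \<in> V" using assms inV by blast
  then have "finite (nbhd V E v)" using lf by (simp add: locally_finite_def)
  moreover have "{a, b, c} \<subseteq> nbhd V E v" using assms inV by (auto simp: nbhd_def)
  ultimately have "card {a, b, c} \<le> card (nbhd V E v)" by (rule card_mono)
  then show ?thesis using assms(4) by (simp add: degree_def)
qed

end


context chb begin

lemma tri: "E a b \<Longrightarrow> E b c \<Longrightarrow> \<not> E a c"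
  using side[of a b] side[of b c] side[of a c] by blast

lemma no5: "E a b \<Longrightarrow> E b c \<Longrightarrow> E c d \<Longrightarrow> E d e \<Longrightarrow> \<not> E a e"
  using side[of a b] side[of b c] side[of c d] side[of d e] side[of a e] by blast

lemma sameside: "E a b \<Longrightarrow> E a c \<Longrightarrow> (b \<in> X) = (c \<in> X)"
  using side[of a b] side[of a c] by blast

lemma lemA:
  assumes d: "distinct [d0,d1,d2,d3,d4,d5]"
    and e: "E d0 d1" "E d1 d2" "E d2 d3" "E d3 d4" "E d4 d5" "E d5 d0"
    and w: "E d2 w" "w \<noteq> d1" "w \<noteq> d3"
  shows "\<exists>u. E u d5 \<and> E u w"
proof -
  have es: "E d1 d0" "E d2 d1" "E d3 d2" "E d4 d3" "E d5 d4" "E d0 d5" "E w d2" using e w sym by auto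
  have wd0: "w \<noteq> d0" using tri[OF e(1) e(2)] w(1) sym by blast
  have wd2: "w \<noteq> d2" using irr w(1) by blast
  have wd5: "w \<noteq> d5"
  proof
    assume "w = d5"
    then show False using no4[of d2 d5 d0 d1] d e w by auto
  qed
  have n1: "\<not> E d0 d3" using no4[of d0 d1 d2 d3] d e sym by auto
  have n2: "\<not> E w d0" using no4[of w d0 d1 d2] d e w wd0 wd2 sym by auto
  have n3: "\<not> E d5 d2" using no4[of d5 d0 d1 d2] d e sym by auto
  have n4: "\<not> E d5 d1" using tri[OF e(6) e(1)] .
  have n5: "\<not> E d5 d3" using tri[OF es(5) es(4)] .
  have n6: "\<not> E w d5" using no5[OF es(7) es(2) es(1) es(6)] .
  have n7: "\<not> E d0 d2" using tri[OF e(1) e(2)] .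
  have n8: "\<not> E d1 d3" using tri[OF e(2) e(3)] .
  have n9: "\<not> E w d1" using tri[OF es(7) es(2)] .
  have n10: "\<not> E d3 w" using tri[OF es(3) w(1)] .
  have ns: "\<not> E d3 d0" "\<not> E d0 w" "\<not> E d2 d5" "\<not> E d1 d5" "\<not> E d3 d5" "\<not> E d5 w"
    "\<not> E d2 d0" "\<not> E d3 d1" "\<not> E d1 w" "\<not> E w d3"
    using n1 n2 n3 n4 n5 n6 n7 n8 n9 n10 sym by blast+
  have irrs: "\<not> E x x" for x using irr .
  let ?f = "\<lambda>x. if x = d3 then w else x"
  let ?A = "{d5, d0, d1, d2, d3}"
  have fA: "?f ` ?A = set [d5, d0, d1, d2, w]" using d by auto
  have V: "d0 \<in> V" "d1 \<in> V" "d2 \<in> V" "d3 \<in> V" "d4 \<in> V" "d5 \<in> V" "w \<in> V" using e w inV by auto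
  obtain g where g: "bip_automorphism V E X Y g" "\<forall>a\<in>?A. g a = ?f a"
  proof -
    have "\<exists>g. bip_automorphism V E X Y g \<and> (\<forall>a\<in>?A. g a = ?f a)"
    proof (rule ext)
      show "?A \<subseteq> V" "finite ?A" using V by auto
      have "connected_on E (set [d5, d0, d1, d2, d3])" by (rule chain_conn[OF symp]) (use e in auto)
      then show "connected_on E ?A" by simp
      have "connected_on E (set [d5, d0, d1, d2, w])" by (rule chain_conn[OF symp]) (use e w in auto)
      then show "connected_on E (?f ` ?A)" using fA by simp
      show "inj_on ?f ?A" using d wd0 wd2 wd5 w by (auto simp: inj_on_def)
      show "?f ` ?A \<subseteq> V" using V by auto
      show "E (?f x) (?f y) = E x y" if "x \<in> ?A" "y \<in> ?A" for x y
        using that d e es ns n1 n2 n3 n4 n5 n6 n7 n8 n9 n10 irrs w by auto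
      show "(?f x \<in> X) = (x \<in> X)" if "x \<in> ?A" for x
        using that sameside[OF w(1) e(3)] by auto
    qed
    then show ?thesis using that by blast
  qed
  note a = aut[OF g(1)]
  have "E (g d3) (g d4)" "E (g d4) (g d5)" using a(3) e by auto
  then have "E w (g d4)" "E (g d4) d5" using g(2) d by auto
  then show ?thesis using sym by blast
qed

end


context chb begin

lemma spider:
  assumes d: "distinct [c0,c1,c2,c3,c4,c5]"
    and e: "E c0 c1" "E c1 c2" "E c2 c3" "E c3 c4" "E c4 c5" "E c5 c0"
    and w: "E c0 w" "w \<noteq> c1" "w \<noteq> c5"
    and p: "E p c3" "E p w" and q: "E w q" "q \<noteq> c0" "q \<noteq> p"
  shows False
proof -
  have es: "E c1 c0" "E c2 c1" "E c3 c2" "E c4 c3" "E c5 c4" "E c0 c5" "E w c0" "E c3 p" "E w p" "E q w"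
    using e w p q sym by auto
  have irrs: "\<not> E x x" for x using irr .
  have wc3: "w \<noteq> c3" using no4[of c0 c1 c2 c3] d e w sym by auto
  have wc2: "w \<noteq> c2" using tri[OF e(1) e(2)] w by auto
  have wc4: "w \<noteq> c4" using tri[OF es(6) es(5)] w by auto
  have wc0: "w \<noteq> c0" using w irrs by auto
  have pc0: "p \<noteq> c0" using no4[of c0 c1 c2 c3] d e sym p by auto
  have pc2: "p \<noteq> c2" using no4[of w c0 c1 c2] d e w wc0 wc2 sym p by auto
  have pc4: "p \<noteq> c4" using no4[of w c0 c5 c4] d e w wc0 wc4 sym p by auto
  have pc1: "p \<noteq> c1" using tri[OF es(1) w(1)] p sym by auto
  have pc5: "p \<noteq> c5" using tri[OF e(6) w(1)] p sym by auto
  have pw: "p \<noteq> w" using p irrs by auto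
  have qc1: "q \<noteq> c1" using tri[OF es(1) w(1)] q sym by auto
  have qc5: "q \<noteq> c5" using tri[OF e(6) w(1)] q sym by auto
  have qc2: "q \<noteq> c2" using no4[of w c0 c1 c2] d e w wc0 wc2 sym q by auto
  have qc4: "q \<noteq> c4" using no4[of w c0 c5 c4] d e w wc0 wc4 sym q by auto
  have qw: "q \<noteq> w" using q irrs by auto
  have qc3: "q \<noteq> c3" using no5[OF es(7) e(1) e(2) e(3)] q by auto
  have n: "\<not> E p c0" "\<not> E q c0" "\<not> E p c1" "\<not> E q c1" "\<not> E p c5" "\<not> E q c5"
    "\<not> E p c2" "\<not> E q c2" "\<not> E p c4" "\<not> E q c4"
  proof -
    show "\<not> E p c0" using tri[OF p(2) es(7)] .
    show "\<not> E q c0" using tri[OF es(10) es(7)] .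
    show "\<not> E p c1" using no4[of p c1 c0 w] d pc1 pc0 pw wc0 w e es by auto
    show "\<not> E q c1" using no4[of q c1 c0 w] d qc1 q qw wc0 w e es by auto
    show "\<not> E p c5" using no4[of p c5 c0 w] d pc5 pc0 pw wc0 w e es by auto
    show "\<not> E q c5" using no4[of q c5 c0 w] d qc5 q qw wc0 w e es by auto
    show "\<not> E p c2" using no5[OF p(2) es(7) e(1) e(2)] .
    show "\<not> E q c2" using no5[OF es(10) es(7) e(1) e(2)] .
    show "\<not> E p c4" using no5[OF p(2) es(7) es(6) es(5)] .
    show "\<not> E q c4" using no5[OF es(10) es(7) es(6) es(5)] .
  qed
  have ns: "\<not> E c0 p" "\<not> E c0 q" "\<not> E c1 p" "\<not> E c1 q" "\<not> E c5 p" "\<not> E c5 q"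
    "\<not> E c2 p" "\<not> E c2 q" "\<not> E c4 p" "\<not> E c4 q" using n sym by blast+
  let ?f = "\<lambda>x. if x = p then q else x"
  let ?A = "{c2, c1, c0, c5, c4, w, p}"
  have fA: "?f ` ?A = set [c2, c1, c0, c5, c4, c5, c0, w, q]" using pc0 pc1 pc2 pc4 pc5 pw by auto
  have V: "c0 \<in> V" "c1 \<in> V" "c2 \<in> V" "c3 \<in> V" "c4 \<in> V" "c5 \<in> V" "w \<in> V" "p \<in> V" "q \<in> V"
    using e w p q inV by auto
  obtain g where g: "bip_automorphism V E X Y g" "\<forall>a\<in>?A. g a = ?f a"
  proof -
    have "\<exists>g. bip_automorphism V E X Y g \<and> (\<forall>a\<in>?A. g a = ?f a)"
    proof (rule ext)
      show "?A \<subseteq> V" "finite ?A" using V by auto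
      have "connected_on E (set [c2, c1, c0, c5, c4, c5, c0, w, p])"
        by (rule chain_conn[OF symp]) (use e es w p in auto)
      then show "connected_on E ?A" by (simp add: insert_commute)
      have "connected_on E (set [c2, c1, c0, c5, c4, c5, c0, w, q])"
        by (rule chain_conn[OF symp]) (use e es w q in auto)
      then show "connected_on E (?f ` ?A)" using fA by simp
      show "inj_on ?f ?A" using d pc0 pc1 pc2 pc4 pc5 pw qc1 qc2 qc4 qc5 qw q
        by (auto simp: inj_on_def)
      show "?f ` ?A \<subseteq> V" using V by auto
      show "E (?f x) (?f y) = E x y" if "x \<in> ?A" "y \<in> ?A" for x y
        using that n ns irrs p q es pc0 pc1 pc2 pc4 pc5 pw by auto
      show "(?f x \<in> X) = (x \<in> X)" if "x \<in> ?A" for x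
        using that sameside[OF es(9) q(1)] by auto
    qed
    then show ?thesis using that by blast
  qed
  note a = aut[OF g(1)]
  have gs: "g c2 = c2" "g c4 = c4" "g p = q" using g(2) pc2 pc4 by auto
  have "E (g c2) (g c3)" "E (g c3) (g c4)" using a(3) e by auto
  then have h: "E c2 (g c3)" "E (g c3) c4" using gs by auto
  have gc3: "g c3 = c3"
  proof (rule ccontr)
    assume "g c3 \<noteq> c3"
    moreover have "g c3 \<noteq> c2" "g c3 \<noteq> c4" using h irrs by auto
    ultimately show False using no4[of c2 c3 c4 "g c3"] d e h sym by auto
  qed
  have "E (g p) (g c3)" using a(3) p by auto
  then have "E q c3" using gs gc3 by simp
  moreover have "p \<noteq> c3" using p(1) irrs by auto
  ultimately show False using no4[of w p c3 q] pw wc3 qw q(3) p es qc3 sym by auto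
qed

end



lemma cyc6:
  assumes "distinct [a,b,c,d,e,f]" "a \<in> V" "b \<in> V" "c \<in> V" "d \<in> V" "e \<in> V" "f \<in> V"
    "E a b" "E b c" "E c d" "E d e" "E e f" "E f a"
  shows "is_cycle V E [a,b,c,d,e,f]"
proof -
  have "E ([a,b,c,d,e,f] ! i) ([a,b,c,d,e,f] ! Suc i)" if "Suc i < 6" for i
  proof -
    have "i = 0 \<or> i = 1 \<or> i = 2 \<or> i = 3 \<or> i = 4" using that by auto
    then show ?thesis using assms by auto
  qed
  then show ?thesis using assms unfolding is_cycle_def by auto
qed

context chb begin

lemma big:
  assumes cy: "cyc V E n c" and mn: "\<forall>m d. cyc V E m d \<longrightarrow> n \<le> m" and n7: "7 \<le> n"
    and w: "E (c 0) w" "w \<noteq> c 1" "w \<noteq> c (n-1)"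
  shows False
proof -
  have cV: "\<And>i. c i \<in> V" and ce: "\<And>i. E (c i) (c (Suc i))" and inj: "inj_on c {..<n}"
    and cn: "c n = c 0"
    using cy unfolding cyc_def by (auto dest: spec[of _ 0])
  have ceq: "\<And>i j. i < n \<Longrightarrow> j < n \<Longrightarrow> c i = c j \<longleftrightarrow> i = j" using inj by (auto simp: inj_on_def)
  have wrap: "E (c (n-1)) (c 0)" using ce[of "n-1"] cn n7 by (simp add: Suc_diff_1)
  have irrs: "\<not> E x x" for x using irr .
  have F1: "i = 0 \<and> j = n - 1" if "i < n" "j < n" "Suc i < j" "E (c i) (c j)" for i j
  proof (rule ccontr)
    assume nw: "\<not> (i = 0 \<and> j = n - 1)"
    let ?m = "j - i + 1"
    have "cyc V E ?m (\<lambda>t. c (i + t mod ?m))"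
    proof (rule mk_cyc)
      show "3 \<le> ?m" using that by auto
      show "inj_on (\<lambda>t. c (i + t)) {..<?m}"
      proof (rule inj_onI)
        fix x y assume xy: "x \<in> {..<?m}" "y \<in> {..<?m}" "c (i + x) = c (i + y)"
        then have "i + x < n" "i + y < n" using that by auto
        then have "i + x = i + y" using ceq xy(3) by blast
        then show "x = y" by simp
      qed
      show "c (i + t) \<in> V" for t using cV .
      show "E (c (i + t)) (c (i + Suc t))" for t using ce[of "i+t"] by simp
      have "E (c j) (c i)" using that(4) by (rule sym)
      then show "E (c (i + (?m - 1))) (c (i + 0))" using that by simp
    qed
    then have "n \<le> ?m" using mn by blast
    then show False using that nw by auto
  qed
  have adjc: "E (c i) (c j) = (j = Suc i \<or> i = Suc j)"
    if "i < n" "j < n" "\<not> (i = 0 \<and> j = n - 1)" "\<not> (j = 0 \<and> i = n - 1)" for i j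
  proof
    assume h: "E (c i) (c j)"
    show "j = Suc i \<or> i = Suc j"
    proof (rule ccontr)
      assume "\<not> ?thesis"
      moreover have "i \<noteq> j" using h irrs by auto
      ultimately have "Suc i < j \<or> Suc j < i" by auto
      moreover have "E (c j) (c i)" using h by (rule sym)
      ultimately show False using F1[of i j] F1[of j i] h that by auto
    qed
  next
    assume "j = Suc i \<or> i = Suc j"
    then show "E (c i) (c j)" using ce[of i] sym[OF ce[of j]] by auto
  qed
  have F2: "w \<noteq> c j" if "j < n" for j
  proof
    assume wj: "w = c j"
    have "j \<noteq> 0" using wj w(1) irrs by (metis)
    moreover have "j \<noteq> 1" "j \<noteq> n - 1" using wj w by auto
    ultimately have "Suc 0 < j" by auto
    then show False using F1[of 0 j] that w wj \<open>j \<noteq> n - 1\<close> n7 by auto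
  qed
  have F3: "\<not> E w (c i)" if "1 \<le> i" "i \<le> n - 3" for i
  proof
    assume wi: "E w (c i)"
    let ?d = "\<lambda>t. if t \<le> i then c t else w"
    have "cyc V E (i+2) (\<lambda>t. ?d (t mod (i+2)))"
    proof (rule mk_cyc)
      show "3 \<le> i + 2" using that by auto
      show "inj_on ?d {..<i+2}"
      proof (rule inj_onI)
        fix x y assume xy: "x \<in> {..<i+2}" "y \<in> {..<i+2}" "?d x = ?d y"
        have xn: "x \<le> i \<Longrightarrow> x < n" "y \<le> i \<Longrightarrow> y < n" using that n7 by auto
        show "x = y"
        proof (cases "x \<le> i"; cases "y \<le> i")
          assume "x \<le> i" "y \<le> i" then show ?thesis using xy ceq xn by auto
        next
          assume "x \<le> i" "\<not> y \<le> i" then show ?thesis using xy F2[of x] xn by auto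
        next
          assume "\<not> x \<le> i" "y \<le> i" then show ?thesis using xy F2[of y] xn by auto
        next
          assume "\<not> x \<le> i" "\<not> y \<le> i" then show ?thesis using xy by auto
        qed
      qed
      show "?d t \<in> V" for t using cV inV[OF w(1)] by auto
      show "E (?d t) (?d (Suc t))" if "Suc t < i + 2" for t
      proof (cases "Suc t \<le> i")
        case True then show ?thesis using ce by auto
      next
        case False
        then have "t = i" using that by auto
        then show ?thesis using sym[OF wi] by auto
      qed
      show "E (?d (i + 2 - 1)) (?d 0)" using sym[OF w(1)] by auto
    qed
    then have "n \<le> i + 2" using mn by blast
    then show False using that n7 by auto
  qed
  define \<phi> where "\<phi> i = (if i = 1 then w else c (i - 2))" for i
  let ?I = "{1..<n}"
  let ?A = "c ` ?I"
  define h where "h = the_inv_into ?I c"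
  define f where "f x = \<phi> (h x)" for x
  have injI: "inj_on c ?I" using inj by (rule inj_on_subset) auto
  have fc: "f (c i) = \<phi> i" if "i \<in> ?I" for i
    using the_inv_into_f_f[OF injI that] by (simp add: f_def h_def)
  have phiV: "\<phi> i \<in> V" for i using cV inV[OF w(1)] by (auto simp: \<phi>_def)
  have phiadj: "E (\<phi> i) (\<phi> j) = E (c i) (c j)" if "i \<in> ?I" "j \<in> ?I" for i j
  proof -
    have key: "E (\<phi> i) (\<phi> j) = E (c i) (c j)" if "i \<in> ?I" "j \<in> ?I" "i \<le> j" for i j
    proof (cases "i = 1")
      case True
      show ?thesis
      proof (cases "j = 1")
        case True then show ?thesis using \<open>i = 1\<close> irrs by (simp add: \<phi>_def)
      next
        case False
        then have j2: "2 \<le> j" "j < n" using that by auto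
        have r: "E (c i) (c j) = (j = 2)" using adjc[of 1 j] j2 True n7 by auto
        show ?thesis
        proof (cases "j = 2")
          case True then show ?thesis using r \<open>i = 1\<close> sym[OF w(1)] by (auto simp: \<phi>_def)
        next
          case False
          then have "\<not> E w (c (j - 2))" using F3[of "j-2"] j2 by auto
          then show ?thesis using r False \<open>i = 1\<close> j2 by (auto simp: \<phi>_def)
        qed
      qed
    next
      case False
      then have ij: "2 \<le> i" "2 \<le> j" "i < n" "j < n" using that by auto
      have "E (c (i-2)) (c (j-2)) = (j - 2 = Suc (i - 2) \<or> i - 2 = Suc (j - 2))"
      proof (rule adjc)
        show "i - 2 < n" "j - 2 < n" "\<not> (i - 2 = 0 \<and> j - 2 = n - 1)" "\<not> (j - 2 = 0 \<and> i - 2 = n - 1)"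
          using ij n7 by auto
      qed
      moreover have "E (c i) (c j) = (j = Suc i \<or> i = Suc j)"
        by (rule adjc) (use ij n7 in auto)
      moreover have "\<phi> i = c (i - 2)" "\<phi> j = c (j - 2)" using ij by (simp_all add: \<phi>_def)
      moreover have "(j - 2 = Suc (i - 2) \<or> i - 2 = Suc (j - 2)) = (j = Suc i \<or> i = Suc j)"
        using ij by arith
      ultimately show ?thesis by simp
    qed
    show ?thesis
    proof (cases "i \<le> j")
      case True then show ?thesis using key that by blast
    next
      case False
      then have "E (\<phi> j) (\<phi> i) = E (c j) (c i)" using key that by auto
      moreover have "E (\<phi> j) (\<phi> i) = E (\<phi> i) (\<phi> j)" "E (c j) (c i) = E (c i) (c j)"
        using sym by (blast, blast)
      ultimately show ?thesis by simp
    qed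
  qed
  have phiside: "(\<phi> i \<in> X) = (c i \<in> X)" if "i \<in> ?I" for i
  proof (cases "i = 1")
    case True
    then show ?thesis using sameside[OF ce[of 0] w(1)] by (simp add: \<phi>_def)
  next
    case False
    then have "2 \<le> i" using that by auto
    then have "Suc (i - 2) = i - 1" "Suc (i - 1) = i" by auto
    then show ?thesis using side[OF ce[of "i-2"]] side[OF ce[of "i-1"]] False by (auto simp: \<phi>_def)
  qed
  have fA: "f ` ?A = \<phi> ` ?I"
  proof -
    have "f ` ?A = (\<lambda>i. f (c i)) ` ?I" by (simp add: image_image)
    also have "\<dots> = \<phi> ` ?I" by (rule image_cong) (simp_all add: fc)
    finally show ?thesis .
  qed
  have Aset: "?A = set (map c [1..<n])" by simp
  have Bset: "\<phi> ` ?I = set (map \<phi> [1..<n])" by simp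
  obtain g where g: "bip_automorphism V E X Y g" "\<forall>a\<in>?A. g a = f a"
  proof -
    have "\<exists>g. bip_automorphism V E X Y g \<and> (\<forall>a\<in>?A. g a = f a)"
    proof (rule ext)
      show "?A \<subseteq> V" "finite ?A" using cV by auto
      have "connected_on E (set (map c [1..<n]))"
        by (rule chain_conn[OF symp chain_map_upt]) (use ce n7 in auto)
      then show "connected_on E ?A" using Aset by simp
      have "connected_on E (set (map \<phi> [1..<n]))"
      proof (rule chain_conn[OF symp chain_map_upt])
        show "E (\<phi> i) (\<phi> (Suc i))" if "1 \<le> i" "Suc i < n" for i
        proof (cases "i = 1")
          case True then show ?thesis using sym[OF w(1)] by (simp add: \<phi>_def)
        next
          case False
          then have "Suc (i - 2) = Suc i - 2" using that by auto
          then show ?thesis using ce[of "i-2"] False that by (simp add: \<phi>_def)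
        qed
      qed (use n7 in auto)
      then show "connected_on E (f ` ?A)" using fA Bset by simp
      show "inj_on f ?A"
      proof (rule inj_onI)
        fix x y assume "x \<in> ?A" "y \<in> ?A" "f x = f y"
        then obtain i j where ij: "i \<in> ?I" "j \<in> ?I" "x = c i" "y = c j" "\<phi> i = \<phi> j" using fc by auto
        show "x = y"
        proof (cases "i = 1 \<or> j = 1")
          case True
          have "i - 2 < n" "j - 2 < n" using ij by auto
          then have "w \<noteq> c (i - 2)" "w \<noteq> c (j - 2)" using F2 by blast+
          then show ?thesis using ij True by (auto simp: \<phi>_def split: if_splits)
        next
          case False
          then have "c (i - 2) = c (j - 2)" using ij by (simp add: \<phi>_def)
          then have "i - 2 = j - 2" using ceq ij by auto
          then have "i = j" using ij False by auto
          then show ?thesis using ij by simp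
        qed
      qed
      show "f ` ?A \<subseteq> V" using fA phiV by auto
      show "E (f x) (f y) = E x y" if "x \<in> ?A" "y \<in> ?A" for x y
        using that fc phiadj by auto
      show "(f x \<in> X) = (x \<in> X)" if "x \<in> ?A" for x
        using that fc phiside by auto
    qed
    then show ?thesis using that by blast
  qed
  note a = aut[OF g(1)]
  define u where "u = g (c 0)"
  have g1: "g (c 1) = w" using g(2) fc[of 1] n7 by (auto simp: \<phi>_def)
  have g2: "g (c (n-1)) = c (n-3)" using g(2) fc[of "n-1"] n7 by (auto simp: \<phi>_def numeral_3_eq_3)
  have uw: "E u w" using a(3)[OF ce[of 0]] g1 by (simp add: u_def)
  have un: "E (c (n-3)) u" using a(3)[OF wrap] g2 by (simp add: u_def)
  have uB: "u \<noteq> \<phi> i" if "i \<in> ?I" for i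
  proof
    assume "u = \<phi> i"
    then have "g (c 0) = g (c i)" using g(2) fc that by (simp add: u_def)
    then have "c 0 = c i" using a(2) cV by (auto simp: inj_on_def)
    then show False using ceq[of 0 i] that by auto
  qed
  have u1: "u \<noteq> w" using uB[of 1] n7 by (simp add: \<phi>_def)
  have u2: "u \<noteq> c 0" using uB[of 2] n7 by (simp add: \<phi>_def)
  have pn: "\<phi> (n-1) = c (n-3)"
  proof -
    have "n - 1 \<noteq> 1" "n - 1 - 2 = n - 3" using n7 by auto
    then show ?thesis by (simp add: \<phi>_def)
  qed
  have u3: "u \<noteq> c (n-3)" using uB[of "n-1"] n7 pn by auto
  have u4: "u \<noteq> c (n-1)"
  proof
    assume "u = c (n-1)"
    then show False using tri[OF wrap w(1)] uw by auto
  qed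
  have ws: "w \<noteq> c (n-3)" "w \<noteq> c (n-2)" "w \<noteq> c (n-1)" "w \<noteq> c 0" using F2 n7 by auto
  have cs: "c (n-3) \<noteq> c (n-2)" "c (n-3) \<noteq> c (n-1)" "c (n-3) \<noteq> c 0"
    "c (n-2) \<noteq> c (n-1)" "c (n-2) \<noteq> c 0" "c (n-1) \<noteq> c 0" using ceq n7 by auto
  have e1: "E (c (n-3)) (c (n-2))" using ce[of "n-3"] n7 by (simp add: numeral_3_eq_3 numeral_2_eq_2 Suc_diff_Suc)
  have e2: "E (c (n-2)) (c (n-1))" using ce[of "n-2"] n7 by (simp add: numeral_2_eq_2 Suc_diff_Suc)
  have u5: "u \<noteq> c (n-2)"
  proof
    assume "u = c (n-2)"
    then have "E (c (n-2)) w" using uw by simp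
    then show False using no4[of w "c 0" "c (n-1)" "c (n-2)"] ws cs sym[OF w(1)] sym[OF wrap] sym[OF e2] by auto
  qed
  have "is_cycle V E [c (n-3), c (n-2), c (n-1), c 0, w, u]"
  proof (rule cyc6)
    show "E w u" "E u (c (n-3))" using sym[OF uw] sym[OF un] by auto
    show "u \<in> V" using inV[OF uw] by simp
    show "w \<in> V" using inV[OF w(1)] by simp
    show "distinct [c (n-3), c (n-2), c (n-1), c 0, w, u]" using cs ws u1 u2 u3 u4 u5 by auto
  qed (use cV e1 e2 wrap w(1) in auto)
  then have "n \<le> length [c (n-3), c (n-2), c (n-1), c 0, w, u]" using mn is_cycle_cyc by blast
  then have "n \<le> 6" by simp
  then show False using n7 by simp
qed

end


context chb begin

lemma main:
  assumes cy: "cyc V E n c" and mn: "\<forall>m d. cyc V E m d \<longrightarrow> n \<le> m" and dg: "degree V E (c 0) > 2"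
  shows False
proof -
  have cV: "\<And>i. c i \<in> V" and ce: "\<And>i. E (c i) (c (Suc i))" and inj: "inj_on c {..<n}"
    and cn: "c n = c 0" and n3: "3 \<le> n"
    using cy unfolding cyc_def by (auto dest: spec[of _ 0])
  have ceq: "\<And>i j. i < n \<Longrightarrow> j < n \<Longrightarrow> c i = c j \<longleftrightarrow> i = j" using inj by (auto simp: inj_on_def)
  have wrap: "E (c (n-1)) (c 0)" using ce[of "n-1"] cn n3 by (simp add: Suc_diff_1)
  have e: "E (c 0) (c 1)" "E (c 1) (c 2)" "E (c 2) (c 3)" "E (c 3) (c 4)" "E (c 4) (c 5)"
    using ce[of 0] ce[of 1] ce[of 2] ce[of 3] ce[of 4] by (simp_all add: numeral_eq_Suc)
  consider "n = 3" | "n = 4" | "n = 5" | "n = 6" | "7 \<le> n" using n3 by linarith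
  then show False
  proof cases
    case 1
    then show False using tri[OF e(1) e(2)] sym[OF wrap] by simp
  next
    case 2
    then show False using no4[of "c 0" "c 1" "c 2" "c 3"] e wrap ceq by auto
  next
    case 3
    then show False using no5[OF e(1) e(2) e(3) e(4)] sym[OF wrap] by simp
  next
    case 4
    have w5: "E (c 5) (c 0)" using wrap 4 by simp
    have d: "distinct [c 0, c 1, c 2, c 3, c 4, c 5]" using ceq 4 by auto
    obtain w where w: "E (c 0) w" "w \<noteq> c 1" "w \<noteq> c 5" using third[OF dg] by blast
    obtain p where p: "E p (c 3)" "E p w"
      using lemA[of "c 2" "c 1" "c 0" "c 5" "c 4" "c 3" w] d sym[OF e(1)] sym[OF e(2)] sym[OF e(3)]
        sym[OF e(4)] sym[OF e(5)] sym[OF w5] w by auto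
    have wc0: "w \<noteq> c 0" using w irr by metis
    have wc2: "w \<noteq> c 2" using tri[OF e(1) e(2)] w by auto
    have wc4: "w \<noteq> c 4" using tri[OF sym[OF w5] sym[OF e(5)]] w by auto
    have pc2: "p \<noteq> c 2" using no4[of w "c 0" "c 1" "c 2"] d e wc0 wc2 w sym[OF w(1)] p sym[OF p(2)] by auto
    have pc4: "p \<noteq> c 4" using no4[of w "c 0" "c 5" "c 4"] d e wc0 wc4 w sym[OF w(1)] sym[OF w5] sym[OF e(5)] p sym[OF p(2)] by auto
    have "degree V E (c 3) > 2"
      by (rule deg3[of "c 3" "c 2" "c 4" p]) (use sym[OF e(3)] e(4) sym[OF p(1)] d pc2 pc4 in auto)
    moreover have "degree V E w = degree V E (c 3)"
    proof (rule deg_side)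
      show "w \<in> V" "c 3 \<in> V" using inV[OF w(1)] cV by auto
      show "(w \<in> X) = (c 3 \<in> X)"
        using sameside[OF e(1) w(1)] sameside[OF sym[OF e(2)] e(3)] by simp
    qed
    ultimately have "degree V E w > 2" by simp
    then obtain q where q: "E w q" "q \<noteq> c 0" "q \<noteq> p" using third by blast
    show False by (rule spider[OF d e w5 w p q])
  next
    case 5
    obtain w where w: "E (c 0) w" "w \<noteq> c 1" "w \<noteq> c (n-1)" using third[OF dg] by blast
    show False by (rule big[OF cy mn 5 w])
  qed
qed

end

theorem lemma4p4:
  fixes V X Y :: "'a set" and E :: "'a \<Rightarrow> 'a \<Rightarrow> bool"
  assumes "conn_homogeneous_bipartite V E X Y"
    and "connected_graph V E"
    and "locally_finite V E"
    and "\<not> is_tree V E"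
    and "\<exists>v \<in> V. degree V E v > 2"
  shows "embeds_induced_C4 V E"
proof (rule ccontr)
  assume nc: "\<not> embeds_induced_C4 V E"
  interpret chb V E X Y using assms(1,3) nc by unfold_locales
  obtain cs where "is_cycle V E cs" using assms(2,4) by (auto simp: is_tree_def)
  then have ex: "\<exists>c. cyc V E (length cs) c" using is_cycle_cyc by blast
  define N where "N = (LEAST m. \<exists>c. cyc V E m c)"
  obtain c where cy: "cyc V E N c" unfolding N_def using LeastI_ex[of "\<lambda>m. \<exists>c. cyc V E m c"] ex by blast
  have mn: "\<forall>m d. cyc V E m d \<longrightarrow> N \<le> m" unfolding N_def by (auto intro: Least_le)
  obtain v where v: "v \<in> V" "degree V E v > 2" using assms(5) by blast
  have c01: "E (c 0) (c (Suc 0))" "c 0 \<in> V" "c (Suc 0) \<in> V" using cy by (auto simp: cyc_def)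
  show False
  proof (cases "(v \<in> X) = (c 0 \<in> X)")
    case True
    then have "degree V E (c 0) > 2" using deg_side[OF v(1) c01(2)] v by simp
    then show False using main[OF cy mn] by blast
  next
    case False
    then have "(v \<in> X) = (c (Suc 0) \<in> X)" using side[OF c01(1)] by blast
    then have "degree V E (c (Suc 0)) > 2" using deg_side[OF v(1) c01(3)] v by simp
    then show False using main[OF cyc_shift[OF cy] mn] by blast
  qed
qed



end
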